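(* For all constants $\beta < \frac{1}{16}$, $L > 16\beta$ and $C_1 > 1$ there exists a constant $C_2 > 1$ such that the following holds. Let $\delta\in(0,1)$, suppose $n > C_2\log\frac{1}{\delta}$, and let $T = \sigma\sqrt{\frac{n}{2\log\frac{2}{\delta}}}$. Let $x_1,\dots,x_n$ be i.i.d. real samples from a distribution with mean $\mu$ and variance at most $\sigma^2$, and let $\mu_0\in\mathbb{R}$ be a given estimate with $|\mu_0 - \mu|\le C_1\sigma\sqrt{\frac{\log\frac{1}{\delta}}{n}}$. Consider the test that computes \[ B = \frac{1}{n}\sum_{i=1}^n (x_i - \mu_0)^2\mathbb{1}_{|x_i - \mu_0| \le 2\beta T} \] and returns ``INLIER-LIGHT'' if $B \le (1-2L)\sigma^2$ and ``OUTLIER-LIGHT'' otherwise. Then with probability at least $1-\delta$: if the distribution is $(4\beta, 4L)$-inlier-light, the test returns ``INLIER-LIGHT''.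
   Context: For a real-valued distribution $x$ with mean $\mu$ and variance at most $\sigma^2$, and with $T = \sigma\sqrt{\frac{n}{2\log\frac{2}{\delta}}}$: $x$ is $(\beta, L)$-inlier-light if $\mathbb{E}[(x-\mu)^2\mathbb{1}_{|x-\mu|\le\beta T}] < (1-L)\sigma^2$. *)

theory Defs
  imports "HOL-Probability.Probability"
begin

definition thrT :: "real \<Rightarrow> nat \<Rightarrow> real \<Rightarrow> real" where
  "thrT \<sigma> n \<delta> = \<sigma> * sqrt (real n / (2 * ln (2 / \<delta>)))"

definition inlier_light :: "real measure \<Rightarrow> real \<Rightarrow> nat \<Rightarrow> real \<Rightarrow> real \<Rightarrow> real \<Rightarrow> bool" where
  "inlier_light D \<sigma> n \<delta> \<beta> L \<longleftrightarrow>
     (let \<mu> = (\<integral>x. x \<partial>D) in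
      (\<integral>x. (x - \<mu>)\<^sup>2 * indicator {y. \<bar>y - \<mu>\<bar> \<le> \<beta> * thrT \<sigma> n \<delta>} x \<partial>D) < (1 - L) * \<sigma>\<^sup>2)"

definition statB :: "nat \<Rightarrow> real \<Rightarrow> real \<Rightarrow> (nat \<Rightarrow> real) \<Rightarrow> real" where
  "statB n \<mu>0 thr xs = (1 / real n) * (\<Sum>i<n. (xs i - \<mu>0)\<^sup>2 * indicator {y. \<bar>y - \<mu>0\<bar> \<le> thr} (xs i))"

end

theory Submission
  imports Defs
begin

lemma chernoff:
  fixes D :: "real measure" and f :: "real \<Rightarrow> real"
  assumes D: "prob_space D" and fm[measurable]: "f \<in> borel_measurable D"
    and f0: "\<And>x. 0 \<le> f x" and fM: "\<And>x. f x \<le> M"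
    and Ef: "(\<integral>x. f x \<partial>D) \<le> a" and lam: "0 < lam" "lam * M \<le> 1"
  shows "measure (PiM {..<n} (\<lambda>_. D)) {xs \<in> space (PiM {..<n} (\<lambda>_. D)). (\<Sum>i<n. f (xs i)) \<ge> c}
     \<le> exp (- lam * c + real n * lam * a * (1 + lam * M))"
proof -
  interpret D: prob_space D by fact
  let ?P = "PiM {..<n} (\<lambda>_. D)"
  interpret P: prob_space ?P by (rule prob_space_PiM) (use D in auto)
  interpret ps: product_sigma_finite "\<lambda>_. D"
    by (simp add: product_sigma_finite_def D.sigma_finite_measure_axioms)
  have M0: "0 \<le> M" using f0[of 0] fM[of 0] by linarith
  have intg: "integrable D (\<lambda>x. exp (lam * f x))"
  proof (rule D.integrable_const_bound[where B="exp (lam * M)"])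
    show "AE x in D. norm (exp (lam * f x)) \<le> exp (lam * M)"
      using fM lam by (auto intro!: mult_left_mono)
  qed simp
  have intf: "integrable D f"
    by (rule D.integrable_const_bound[where B=M]) (use f0 fM in auto)
  have set_eq: "{xs \<in> space ?P. (\<Sum>i<n. f (xs i)) \<ge> c} =
       {xs \<in> space ?P. exp (lam * (\<Sum>i<n. f (xs i))) \<ge> exp (lam * c)}"
    using lam by auto
  have intP: "integrable ?P (\<lambda>xs. exp (lam * (\<Sum>i<n. f (xs i))))"
  proof (rule P.integrable_const_bound[where B="exp (lam * (n * M))"])
    show "AE x in ?P. norm (exp (lam * (\<Sum>i<n. f (x i)))) \<le> exp (lam * (n * M))"
    proof (rule AE_I2)
      fix x
      have "(\<Sum>i<n. f (x i)) \<le> (\<Sum>i<n. M)" by (rule sum_mono) (use fM in auto)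
      then show "norm (exp (lam * (\<Sum>i<n. f (x i)))) \<le> exp (lam * (n * M))"
        using lam by (auto intro!: mult_left_mono)
    qed
  qed simp
  have "measure ?P {xs \<in> space ?P. exp (lam * (\<Sum>i<n. f (xs i))) \<ge> exp (lam * c)}
      \<le> (\<integral>xs. exp (lam * (\<Sum>i<n. f (xs i))) \<partial>?P) / exp (lam * c)"
    by (rule integral_Markov_inequality_measure[OF intP, where A="space ?P"]) auto
  also have "(\<integral>xs. exp (lam * (\<Sum>i<n. f (xs i))) \<partial>?P) = (\<integral>xs. (\<Prod>i<n. exp (lam * f (xs i))) \<partial>?P)"
    by (simp add: sum_distrib_left exp_sum)
  also have "\<dots> = (\<Prod>i<n. (\<integral>x. exp (lam * f x) \<partial>D))"
    using ps.product_integral_prod[of "{..<n}" "\<lambda>_ x. exp (lam * f x)"] intg by simp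
  also have "\<dots> = (\<integral>x. exp (lam * f x) \<partial>D) ^ n" by simp
  also have "\<dots> \<le> exp (lam * a * (1 + lam * M)) ^ n"
  proof (rule power_mono)
    have pt: "exp (lam * f x) \<le> 1 + (lam * (1 + lam * M)) * f x" for x
    proof -
      have "exp (lam * f x) \<le> 1 + lam * f x + (lam * f x)\<^sup>2"
        by (rule exp_bound) (use lam f0[of x] fM[of x] in \<open>auto intro: order.trans[OF mult_left_mono]\<close>)
      also have "(lam * f x)\<^sup>2 \<le> lam * lam * M * f x"
      proof -
        have ff: "f x * f x \<le> M * f x" by (rule mult_right_mono) (use f0[of x] fM[of x] in auto)
        have "(lam * f x)\<^sup>2 = (lam * lam) * (f x * f x)" by (simp add: power2_eq_square algebra_simps)
        also have "\<dots> \<le> (lam * lam) * (M * f x)" by (rule mult_left_mono[OF ff]) simp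
        finally show ?thesis by (simp add: algebra_simps)
      qed
      finally show ?thesis by (simp add: algebra_simps)
    qed
    have "(\<integral>x. exp (lam * f x) \<partial>D) \<le> (\<integral>x. 1 + (lam * (1 + lam * M)) * f x \<partial>D)"
      by (rule integral_mono[OF intg]) (use intf pt in auto)
    also have "\<dots> = 1 + (lam * (1 + lam * M)) * (\<integral>x. f x \<partial>D)"
      using intf by (simp add: D.prob_space)
    also have "\<dots> \<le> 1 + (lam * (1 + lam * M)) * a"
      using Ef lam M0 by (intro add_left_mono mult_left_mono) auto
    also have "\<dots> \<le> exp (lam * a * (1 + lam * M))"
      using exp_ge_add_one_self[of "lam * a * (1 + lam * M)"] by (simp add: algebra_simps)
    finally show "(\<integral>x. exp (lam * f x) \<partial>D) \<le> exp (lam * a * (1 + lam * M))" .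
    show "0 \<le> (\<integral>x. exp (lam * f x) \<partial>D)" by (rule integral_nonneg_AE) auto
  qed
  also have "exp (lam * a * (1 + lam * M)) ^ n = exp (real n * lam * a * (1 + lam * M))"
    by (simp add: exp_of_nat_mult[symmetric] algebra_simps)
  finally have "measure ?P {xs \<in> space ?P. exp (lam * (\<Sum>i<n. f (xs i))) \<ge> exp (lam * c)}
      \<le> exp (real n * lam * a * (1 + lam * M)) / exp (lam * c)"
    by (simp add: divide_right_mono)
  also have "\<dots> = exp (- lam * c + real n * lam * a * (1 + lam * M))"
    by (simp add: exp_diff[symmetric])
  finally show ?thesis using set_eq by simp
qed


lemma sq_split:
  fixes u d L :: real assumes "0 < L"
  shows "(u - d)\<^sup>2 \<le> (1 + L) * u\<^sup>2 + (1 + 1 / L) * d\<^sup>2"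
proof -
  have "(1 + L) * u\<^sup>2 + (1 + 1 / L) * d\<^sup>2 - (u - d)\<^sup>2 = (L * u + d)\<^sup>2 / L"
    using assms by (simp add: field_simps power2_eq_square)
  moreover have "0 \<le> (L * u + d)\<^sup>2 / L" using assms by simp
  ultimately show ?thesis by linarith
qed

theorem lemma14:
  fixes \<beta> L C1 :: real
  assumes "0 < \<beta>" "\<beta> < 1/16" "L > 16 * \<beta>" "C1 > 1"
  shows "\<exists>C2 > 1. \<forall>(\<delta>::real) (n::nat) (\<sigma>::real) (D::real measure) (\<mu>0::real).
     0 < \<delta> \<and> \<delta> < 1 \<and> real n > C2 * ln (1 / \<delta>) \<and> 0 < \<sigma> \<and>
     prob_space D \<and> sets D = sets borel \<and> integrable D (\<lambda>x. x\<^sup>2) \<and>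
     (\<integral>x. (x - (\<integral>y. y \<partial>D))\<^sup>2 \<partial>D) \<le> \<sigma>\<^sup>2 \<and>
     \<bar>\<mu>0 - (\<integral>y. y \<partial>D)\<bar> \<le> C1 * \<sigma> * sqrt (ln (1 / \<delta>) / real n) \<and>
     inlier_light D \<sigma> n \<delta> (4 * \<beta>) (4 * L)
     \<longrightarrow> measure (PiM {..<n} (\<lambda>_. D))
           {xs \<in> space (PiM {..<n} (\<lambda>_. D)).
              statB n \<mu>0 (2 * \<beta> * thrT \<sigma> n \<delta>) xs \<le> (1 - 2 * L) * \<sigma>\<^sup>2}
         \<ge> 1 - \<delta>"
proof -
  have b0: "0 < \<beta>" and L0: "0 < L" and L16: "16 * \<beta> < L" and C1: "1 < C1" using assms by auto
  define C2 where "C2 = C1\<^sup>2 / \<beta>\<^sup>2 + C1\<^sup>2 / L ^ 3 + 2"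
  have C2a: "C1\<^sup>2 / \<beta>\<^sup>2 \<ge> 0" "C1\<^sup>2 / L ^ 3 \<ge> 0" using L0 by auto
  have C2gt: "C2 > 1" unfolding C2_def using C2a by linarith
  show ?thesis
  proof (intro exI[of _ C2] conjI allI impI C2gt)
    fix \<delta> :: real and n :: nat and \<sigma> :: real and D :: "real measure" and \<mu>0 :: real
    assume H: "0 < \<delta> \<and> \<delta> < 1 \<and> real n > C2 * ln (1 / \<delta>) \<and> 0 < \<sigma> \<and>
     prob_space D \<and> sets D = sets borel \<and> integrable D (\<lambda>x. x\<^sup>2) \<and>
     (\<integral>x. (x - (\<integral>y. y \<partial>D))\<^sup>2 \<partial>D) \<le> \<sigma>\<^sup>2 \<and>
     \<bar>\<mu>0 - (\<integral>y. y \<partial>D)\<bar> \<le> C1 * \<sigma> * sqrt (ln (1 / \<delta>) / real n) \<and>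
     inlier_light D \<sigma> n \<delta> (4 * \<beta>) (4 * L)"
    then have d0: "0 < \<delta>" and d1: "\<delta> < 1" and nC: "real n > C2 * ln (1 / \<delta>)" and s0: "0 < \<sigma>"
      and D: "prob_space D" and sD: "sets D = sets borel"
      and mu0: "\<bar>\<mu>0 - (\<integral>y. y \<partial>D)\<bar> \<le> C1 * \<sigma> * sqrt (ln (1 / \<delta>) / real n)"
      and IL: "inlier_light D \<sigma> n \<delta> (4 * \<beta>) (4 * L)" by auto
    interpret D: prob_space D by fact
    let ?P = "PiM {..<n} (\<lambda>_. D)"
    interpret P: prob_space ?P by (rule prob_space_PiM) (use D in auto)
    define \<mu> where "\<mu> = (\<integral>y. y \<partial>D)"
    define d where "d = \<mu>0 - \<mu>"
    define l where "l = ln (1 / \<delta>)"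
    define K where "K = ln (2 / \<delta>)"
    define T where "T = thrT \<sigma> n \<delta>"
    have l0: "0 < l" unfolding l_def using d0 d1 by (simp add: ln_div)
    have Kl: "K = ln 2 + l" unfolding K_def l_def using d0 by (simp add: ln_div)
    have ln2: "0 < ln (2::real)" by (rule ln_gt_zero) simp
    have K0: "0 < K" using Kl l0 ln2 by linarith
    have "0 < C2 * l" using C2gt l0 by simp
    then have n0: "0 < real n" using nC unfolding l_def by linarith
    have n1: "1 \<le> real n" using n0 by simp
    have C2pos: "0 < C2" using C2gt by simp
    have ln_n: "l / real n < 1 / C2" using nC n0 C2pos unfolding l_def[symmetric]
      by (simp add: field_simps)
    have dsq: "d\<^sup>2 \<le> C1\<^sup>2 * \<sigma>\<^sup>2 * (l / real n)"
    proof -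
      have "\<bar>d\<bar> \<le> C1 * \<sigma> * sqrt (l / real n)" using mu0 unfolding d_def \<mu>_def l_def .
      then have "\<bar>d\<bar>\<^sup>2 \<le> (C1 * \<sigma> * sqrt (l / real n))\<^sup>2" by (rule power_mono) simp
      also have "\<dots> = C1\<^sup>2 * \<sigma>\<^sup>2 * (l / real n)" using l0 n0 by (simp add: power_mult_distrib)
      finally show ?thesis by simp
    qed
    have dsq2: "d\<^sup>2 \<le> C1\<^sup>2 * \<sigma>\<^sup>2 * (1 / C2)"
    proof -
      have "C1\<^sup>2 * \<sigma>\<^sup>2 * (l / real n) \<le> C1\<^sup>2 * \<sigma>\<^sup>2 * (1 / C2)"
        by (rule mult_left_mono) (use ln_n in auto)
      then show ?thesis using dsq by linarith
    qed
    have c2b: "C1\<^sup>2 * (1 / C2) \<le> \<beta>\<^sup>2"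
    proof -
      have "C1\<^sup>2 / \<beta>\<^sup>2 \<le> C2" unfolding C2_def using C2a by linarith
      then have "C1\<^sup>2 \<le> \<beta>\<^sup>2 * C2" using b0 by (simp add: field_simps)
      then show ?thesis using C2pos by (simp add: field_simps)
    qed
    have c2L: "C1\<^sup>2 * (1 / C2) \<le> L ^ 3"
    proof -
      have "C1\<^sup>2 / L ^ 3 \<le> C2" unfolding C2_def using C2a by linarith
      then have "C1\<^sup>2 \<le> L ^ 3 * C2" using L0 by (simp add: field_simps)
      then show ?thesis using C2pos by (simp add: field_simps)
    qed
    have dB: "d\<^sup>2 \<le> \<beta>\<^sup>2 * \<sigma>\<^sup>2"
      using dsq2 c2b mult_right_mono[OF c2b, of "\<sigma>\<^sup>2"] by (simp add: algebra_simps)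
    have dL: "d\<^sup>2 \<le> L ^ 3 * \<sigma>\<^sup>2"
      using dsq2 mult_right_mono[OF c2L, of "\<sigma>\<^sup>2"] by (simp add: algebra_simps)
    have dabs: "\<bar>d\<bar> \<le> \<beta> * \<sigma>"
    proof -
      have "\<bar>d\<bar>\<^sup>2 \<le> (\<beta> * \<sigma>)\<^sup>2" using dB by (simp add: power_mult_distrib)
      moreover have "0 \<le> \<beta> * \<sigma>" using b0 s0 by simp
      ultimately show ?thesis by (rule power2_le_imp_le)
    qed
    have L4: "L < 1/4"
    proof -
      have "0 \<le> (\<integral>x. (x - \<mu>)\<^sup>2 * indicator {y. \<bar>y - \<mu>\<bar> \<le> 4 * \<beta> * T} x \<partial>D)"
        by (rule integral_nonneg_AE) auto
      moreover have "(\<integral>x. (x - \<mu>)\<^sup>2 * indicator {y. \<bar>y - \<mu>\<bar> \<le> 4 * \<beta> * T} x \<partial>D) < (1 - 4 * L) * \<sigma>\<^sup>2"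
        using IL unfolding inlier_light_def Let_def \<mu>_def T_def by simp
      ultimately have "0 < (1 - 4 * L) * \<sigma>\<^sup>2" by linarith
      then show ?thesis using s0 by (simp add: zero_less_mult_iff)
    qed
    have T2: "T\<^sup>2 = \<sigma>\<^sup>2 * real n / (2 * K)"
      unfolding T_def thrT_def K_def[symmetric] using K0 n0 by (simp add: power_mult_distrib)
    have Tge: "\<sigma> / 2 \<le> T"
    proof -
      have "ln 2 < (1::real)" using ln_2_less_1 .
      have "l < C2 * l" using C2gt l0 by simp
      then have "K < 2 * real n" using Kl nC n1 \<open>ln 2 < 1\<close> unfolding l_def by linarith
      then have "1/4 \<le> real n / (2 * K)" using K0 by (simp add: field_simps)
      then have "sqrt (1/4) \<le> sqrt (real n / (2 * K))" by (rule real_sqrt_le_mono)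
      moreover have "sqrt (1/4::real) = 1/2" by (simp add: real_sqrt_divide)
      ultimately have h: "1/2 \<le> sqrt (real n / (2 * K))" by simp
      have "\<sigma> * (1/2) \<le> \<sigma> * sqrt (real n / (2 * K))" by (rule mult_left_mono[OF h]) (use s0 in simp)
      then show ?thesis unfolding T_def thrT_def K_def[symmetric] by simp
    qed
    have T0: "0 < T" using Tge s0 by linarith
    have "\<beta> * \<sigma> \<le> \<beta> * (2 * T)" by (rule mult_left_mono) (use Tge b0 in auto)
    then have d2T: "\<bar>d\<bar> \<le> 2 * \<beta> * T" using dabs by simp
    define f where "f y = (y - \<mu>0)\<^sup>2 * indicator {y. \<bar>y - \<mu>0\<bar> \<le> 2 * \<beta> * T} y" for y
    define g where "g y = (y - \<mu>)\<^sup>2 * indicator {y. \<bar>y - \<mu>\<bar> \<le> 4 * \<beta> * T} y" for y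
    define M where "M = (2 * \<beta> * T)\<^sup>2"
    have fmb: "f \<in> borel_measurable borel" unfolding f_def by measurable
    have fm[measurable]: "f \<in> borel_measurable D"
      using fmb by (simp add: measurable_cong_sets[OF sD refl])
    have gmb: "g \<in> borel_measurable borel" unfolding g_def by measurable
    have gm[measurable]: "g \<in> borel_measurable D"
      using gmb by (simp add: measurable_cong_sets[OF sD refl])
    have f0: "0 \<le> f y" for y unfolding f_def by simp
    have g0: "0 \<le> g y" for y unfolding g_def by simp
    have fM: "f y \<le> M" for y
    proof (cases "\<bar>y - \<mu>0\<bar> \<le> 2 * \<beta> * T")
      case True
      then have "\<bar>y - \<mu>0\<bar>\<^sup>2 \<le> (2 * \<beta> * T)\<^sup>2" by (rule power_mono) simp
      then show ?thesis using True unfolding f_def M_def by simp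
    next
      case False then show ?thesis unfolding f_def M_def by simp
    qed
    have gM: "g y \<le> (4 * \<beta> * T)\<^sup>2" for y
    proof (cases "\<bar>y - \<mu>\<bar> \<le> 4 * \<beta> * T")
      case True
      then have "\<bar>y - \<mu>\<bar>\<^sup>2 \<le> (4 * \<beta> * T)\<^sup>2" by (rule power_mono) simp
      then show ?thesis using True unfolding g_def by simp
    next
      case False then show ?thesis unfolding g_def using b0 T0 by simp
    qed
    have intf: "integrable D f"
      by (rule D.integrable_const_bound[where B=M]) (use f0 fM in auto)
    have intg: "integrable D g"
      by (rule D.integrable_const_bound[where B="(4 * \<beta> * T)\<^sup>2"]) (use g0 gM in auto)
    have Eg: "(\<integral>x. g x \<partial>D) < (1 - 4 * L) * \<sigma>\<^sup>2"
      using IL unfolding inlier_light_def Let_def \<mu>_def[symmetric] T_def[symmetric] g_def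
      by (simp add: mult.assoc)
    have pt: "f y \<le> (1 + L) * g y + (1 + 1 / L) * d\<^sup>2" for y
    proof (cases "\<bar>y - \<mu>0\<bar> \<le> 2 * \<beta> * T")
      case True
      then have "\<bar>y - \<mu>\<bar> \<le> 4 * \<beta> * T" using d2T unfolding d_def by linarith
      then have "g y = (y - \<mu>)\<^sup>2" unfolding g_def by simp
      moreover have "f y = ((y - \<mu>) - d)\<^sup>2" using True unfolding f_def d_def by simp
      ultimately show ?thesis using sq_split[OF L0, of "y - \<mu>" d] by simp
    next
      case False
      then have "f y = 0" unfolding f_def by simp
      then show ?thesis using g0[of y] L0 by (simp add: add_nonneg_nonneg)
    qed
    define a where "a = (1 - 3 * L) * \<sigma>\<^sup>2"
    have Ef: "(\<integral>x. f x \<partial>D) \<le> a"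
    proof -
      have "(\<integral>x. f x \<partial>D) \<le> (\<integral>x. (1 + L) * g x + (1 + 1 / L) * d\<^sup>2 \<partial>D)"
        by (rule integral_mono[OF intf]) (use intg pt in auto)
      also have "\<dots> = (1 + L) * (\<integral>x. g x \<partial>D) + (1 + 1 / L) * d\<^sup>2"
        using intg by (simp add: D.prob_space)
      also have "\<dots> \<le> (1 + L) * ((1 - 4 * L) * \<sigma>\<^sup>2) + (1 + 1 / L) * (L ^ 3 * \<sigma>\<^sup>2)"
        using Eg dL L0 by (intro add_mono mult_left_mono) auto
      also have "\<dots> = (1 - 3 * L - 3 * L\<^sup>2 + L ^ 3) * \<sigma>\<^sup>2"
        using L0 by (simp add: field_simps power2_eq_square power3_eq_cube)
      also have "\<dots> \<le> a" unfolding a_def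
      proof (rule mult_right_mono)
        have "L ^ 3 \<le> 3 * L\<^sup>2" using L0 L4 by (simp add: power2_eq_square power3_eq_cube)
        then show "1 - 3 * L - 3 * L\<^sup>2 + L ^ 3 \<le> 1 - 3 * L" by simp
      qed simp
      finally show ?thesis .
    qed
    have M0: "0 < M" unfolding M_def using b0 T0 by simp
    define lam where "lam = (L / 2) / M"
    have lam0: "0 < lam" unfolding lam_def using L0 M0 by simp
    have lamM: "lam * M = L / 2" unfolding lam_def using M0 by simp
    define t where "t = (1 - 2 * L) * \<sigma>\<^sup>2"
    have ch: "measure ?P {xs \<in> space ?P. (\<Sum>i<n. f (xs i)) \<ge> real n * t}
       \<le> exp (- lam * (real n * t) + real n * lam * a * (1 + lam * M))"
      by (rule chernoff[OF D fm f0 fM Ef lam0]) (use lamM L4 in simp)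
    have q: "lam * real n * \<sigma>\<^sup>2 = L * K / (4 * \<beta>\<^sup>2)"
    proof -
      have "M = 4 * \<beta>\<^sup>2 * T\<^sup>2" unfolding M_def by (simp add: power_mult_distrib)
      then have "M = 2 * \<beta>\<^sup>2 * \<sigma>\<^sup>2 * real n / K" using T2 K0 by (simp add: field_simps)
      then show ?thesis unfolding lam_def using K0 n0 s0 b0 M0 by (simp add: field_simps power2_eq_square)
    qed
    have ex: "- lam * (real n * t) + real n * lam * a * (1 + lam * M)
        = - (lam * real n * \<sigma>\<^sup>2) * (L / 2 + 3 * L\<^sup>2 / 2)"
      unfolding lamM t_def a_def by (simp add: algebra_simps power2_eq_square)
    have "L\<^sup>2 \<ge> 8 * \<beta>\<^sup>2"
    proof -
      have "(16 * \<beta>)\<^sup>2 \<le> L\<^sup>2" using L16 b0 by (intro power_mono) auto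
      moreover have "0 \<le> \<beta>\<^sup>2" by simp
      moreover have "(16 * \<beta>)\<^sup>2 = 256 * \<beta>\<^sup>2" by (simp add: power_mult_distrib)
      ultimately show ?thesis by linarith
    qed
    then have r1: "L\<^sup>2 / (8 * \<beta>\<^sup>2) \<ge> 1" using b0 by (simp add: field_simps)
    have r2: "L * K / (4 * \<beta>\<^sup>2) * (L / 2) = K * (L\<^sup>2 / (8 * \<beta>\<^sup>2))"
      using b0 by (simp add: field_simps power2_eq_square)
    have r3: "L * K / (4 * \<beta>\<^sup>2) * (L / 2) \<le> L * K / (4 * \<beta>\<^sup>2) * (L / 2 + 3 * L\<^sup>2 / 2)"
      by (rule mult_left_mono) (use L0 K0 b0 in auto)
    have r4: "K \<le> K * (L\<^sup>2 / (8 * \<beta>\<^sup>2))" using mult_left_mono[OF r1, of K] K0 by simp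
    have "L * K / (4 * \<beta>\<^sup>2) * (L / 2 + 3 * L\<^sup>2 / 2) \<ge> K"
      using r2 r3 r4 by linarith
    then have "exp (- lam * (real n * t) + real n * lam * a * (1 + lam * M)) \<le> exp (- K)"
      unfolding ex q by simp
    also have "exp (- K) = \<delta> / 2" unfolding K_def using d0 by (simp add: exp_minus)
    finally have bad: "measure ?P {xs \<in> space ?P. (\<Sum>i<n. f (xs i)) \<ge> real n * t} \<le> \<delta> / 2"
      using ch by linarith
    have statB_eq: "statB n \<mu>0 (2 * \<beta> * thrT \<sigma> n \<delta>) xs = (1 / real n) * (\<Sum>i<n. f (xs i))" for xs
      unfolding statB_def f_def T_def by simp
    let ?G = "{xs \<in> space ?P. statB n \<mu>0 (2 * \<beta> * thrT \<sigma> n \<delta>) xs \<le> (1 - 2 * L) * \<sigma>\<^sup>2}"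
    let ?H = "{xs \<in> space ?P. (\<Sum>i<n. f (xs i)) \<ge> real n * t}"
    have Gs: "?G \<in> sets ?P" unfolding statB_eq by measurable
    have Hs: "?H \<in> sets ?P" by measurable
    have cover: "space ?P \<subseteq> ?G \<union> ?H"
    proof
      fix xs assume xs: "xs \<in> space ?P"
      show "xs \<in> ?G \<union> ?H"
      proof (cases "(1 / real n) * (\<Sum>i<n. f (xs i)) \<le> t")
        case True then show ?thesis using xs unfolding statB_eq t_def by simp
      next
        case False
        then have "real n * t \<le> (\<Sum>i<n. f (xs i))" using n0 by (simp add: field_simps)
        then show ?thesis using xs by simp
      qed
    qed
    have "1 = measure ?P (space ?P)" using P.prob_space by simp
    also have "\<dots> \<le> measure ?P (?G \<union> ?H)"
      using cover Gs Hs by (intro P.finite_measure_mono) auto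
    also have "\<dots> \<le> measure ?P ?G + measure ?P ?H"
      using Gs Hs by (intro measure_subadditive) (auto simp: P.emeasure_eq_measure)
    finally show "measure ?P ?G \<ge> 1 - \<delta>" using bad d0 by linarith
  qed
qed

end
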